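(* Let $N$ be a positive integer, let $G\in\mathbb{C}^{N\times N}$ and $\hat G^{-1}\in\mathbb{C}^{N\times N}$, and define the modeling-error matrix $\Delta=\hat G^{-1}G$. Write its entries in polar form as $\Delta_{ij}=\Delta_{m,ij}\,e^{\mathrm{i}\,\Delta_{p,ij}}$ with $\Delta_{m,ij}=|\Delta_{ij}|\ge 0$ and $\Delta_{p,ij}\in\mathbb{R}$ (here $\mathrm{i}=\sqrt{-1}$ and $i,j$ are indices), and assume $\Delta_{m,ii}\neq 0$ for all $i$. Let $\rho=\mathrm{diag}(\rho_1,\dots,\rho_N)$ with real $\rho_i$, and suppose that for every $i\in\{1,\dots,N\}$, $$\Delta_{m,ii}\cos\Delta_{p,ii} > \sum_{j\neq i}\Delta_{m,ij} \quad\text{and}\quad 0<\rho_i< 2\,\frac{\Delta_{m,ii}\cos\Delta_{p,ii}-\sum_{j\ne i}\Delta_{m,ij}}{\Delta_{m,ii}^2-\left(\sum_{j\neq i}\Delta_{m,ij}\right)^2}.$$ Then every eigenvalue of $I-\rho\Delta$ has magnitude less than one; in particular $G$ and $\hat G^{-1}$ are invertible, and for every $Y_d\in\mathbb{C}^N$ and every initial $U_0\in\mathbb{C}^N$ the sequence $U_k=U_{k-1}+\rho\,\hat G^{-1}(Y_d-GU_{k-1})$, $k\ge1$, converges to the desired input $U^*=G^{-1}Y_d$.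
   Context: This describes the iterative input update at a fixed frequency $\omega$ for a square multiple-input multiple-output linear system with transfer matrix $G=G(\omega)$, estimated inverse model $\hat G^{-1}=\hat G^{-1}(\omega)$, diagonal iteration gain $\rho=\rho(\omega)$, desired output $Y_d$ and input $U_k$ at iteration $k$. (Under the first condition, the denominator in the bound on $\rho_i$ is positive.) *)

theory Defs
  imports "HOL-Analysis.Analysis"
begin

definition diag_real :: "('n::finite \<Rightarrow> real) \<Rightarrow> complex^'n^'n" where
  "diag_real r = (\<chi> i j. if i = j then complex_of_real (r i) else 0)"

definition is_eigenvalue :: "complex^'n^'n \<Rightarrow> complex \<Rightarrow> bool" where
  "is_eigenvalue A l \<longleftrightarrow> (\<exists>v. v \<noteq> 0 \<and> A *v v = (\<chi> i. l * v $ i))"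

primrec ilc_seq :: "('n::finite \<Rightarrow> real) \<Rightarrow> complex^'n^'n \<Rightarrow> complex^'n^'n
    \<Rightarrow> complex^'n \<Rightarrow> complex^'n \<Rightarrow> nat \<Rightarrow> complex^'n" where
  "ilc_seq r Ginv G Yd U0 0 = U0"
| "ilc_seq r Ginv G Yd U0 (Suc k) =
     ilc_seq r Ginv G Yd U0 k + (diag_real r ** Ginv) *v (Yd - G *v ilc_seq r Ginv G Yd U0 k)"

end

theory Submission
  imports Defs
begin

definition mxn :: "complex^'n::finite \<Rightarrow> real" where
  "mxn v = Max (range (\<lambda>i. cmod (v $ i)))"

lemma mxn_ge: "cmod (v $ i) \<le> mxn v"
  unfolding mxn_def by (rule Max_ge) auto

lemma mxn_nonneg: "0 \<le> mxn v"
  using mxn_ge[of v] norm_ge_zero order_trans by blast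

lemma mxn_attained: "\<exists>k. mxn v = cmod (v $ k)"
proof -
  have "mxn v \<in> range (\<lambda>i. cmod (v $ i))" unfolding mxn_def by (rule Max_in) auto
  then show ?thesis by auto
qed

lemma mxn_le: assumes "\<And>i. cmod (v $ i) \<le> c" shows "mxn v \<le> c"
  using assms unfolding mxn_def by (subst Max_le_iff) auto

lemma mxn_zero: assumes "mxn v = 0" shows "v = 0"
proof -
  have "\<And>i. v $ i = 0" using mxn_ge[of v] assms by (metis norm_le_zero_iff)
  then show ?thesis by (simp add: vec_eq_iff)
qed

lemma row_bound:
  fixes A :: "complex^'n::finite^'n"
  shows "cmod ((A *v v) $ i) \<le> (\<Sum>j\<in>UNIV. cmod (A $ i $ j)) * mxn v"
proof -
  have "cmod ((A *v v) $ i) = cmod (\<Sum>j\<in>UNIV. A $ i $ j * v $ j)"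
    by (simp add: matrix_vector_mult_def)
  also have "\<dots> \<le> (\<Sum>j\<in>UNIV. cmod (A $ i $ j * v $ j))" by (rule norm_sum)
  also have "\<dots> \<le> (\<Sum>j\<in>UNIV. cmod (A $ i $ j) * mxn v)"
    by (rule sum_mono) (simp add: norm_mult mult_left_mono mxn_ge)
  also have "\<dots> = (\<Sum>j\<in>UNIV. cmod (A $ i $ j)) * mxn v" by (simp add: sum_distrib_right)
  finally show ?thesis .
qed

lemma norm_le_mxn:
  fixes v :: "complex^'n::finite"
  shows "norm v \<le> real CARD('n) * mxn v"
proof -
  have "norm v \<le> (\<Sum>i\<in>UNIV. norm (v $ i))"
    unfolding norm_vec_def by (rule L2_set_le_sum) auto
  also have "\<dots> \<le> (\<Sum>i\<in>(UNIV::'n set). mxn v)" by (rule sum_mono) (simp add: mxn_ge)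
  finally show ?thesis by simp
qed

lemma scalar_bound:
  fixes a c s r S th :: real
  assumes a: "a > 0" and S: "S \<ge> 0" and dom: "a * cos th > S" and r: "r > 0"
    and rb: "r < 2 * ((a * cos th - S) / (a\<^sup>2 - S\<^sup>2))"
  shows "cmod (1 - complex_of_real r * (complex_of_real a * cis th)) + r * S < 1"
proof -
  have c1: "cos th \<le> 1" by simp
  have "a * cos th \<le> a" using a c1 by (simp add: mult_left_le)
  hence aS: "S < a" using dom by linarith
  have d: "a\<^sup>2 - S\<^sup>2 > 0" using aS S by (simp add: power_strict_mono)
  have rb2: "r * (a\<^sup>2 - S\<^sup>2) < 2 * (a * cos th - S)"
    using rb d by (simp add: pos_less_divide_eq)
  have "a\<^sup>2 - S\<^sup>2 = (a - S) * (a + S)" by (simp add: power2_eq_square algebra_simps)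
  have e: "r * (a + S) * (a - S) = r * (a\<^sup>2 - S\<^sup>2)" by (simp add: power2_eq_square algebra_simps)
  have "r * (a + S) * (a - S) < 2 * (a - S)"
  proof -
    have "a * cos th - S \<le> a - S" using \<open>a * cos th \<le> a\<close> by linarith
    hence "2 * (a * cos th - S) \<le> 2 * (a - S)" by (rule mult_left_mono) simp
    then show ?thesis unfolding e using rb2 by linarith
  qed
  hence "r * (a + S) < 2" by (rule mult_right_less_imp_less) (use aS in simp)
  hence pos: "1 - r * S > 0"
  proof -
    have "r * S < r * a" using r aS by simp
    then show ?thesis using \<open>r * (a + S) < 2\<close> by (simp add: algebra_simps)
  qed
  let ?z = "1 - complex_of_real r * (complex_of_real a * cis th)"
  have "(cmod ?z)\<^sup>2 = (1 - r * a * cos th)\<^sup>2 + (r * a * sin th)\<^sup>2"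
    by (simp add: cmod_power2 cis.ctr mult.assoc)
  also have "\<dots> = 1 - 2 * r * a * cos th + r\<^sup>2 * a\<^sup>2"
  proof -
    have sq: "(sin th)\<^sup>2 = 1 - (cos th)\<^sup>2" by (simp add: sin_squared_eq)
    show ?thesis unfolding power_mult_distrib sq by (simp add: power2_eq_square algebra_simps)
  qed
  also have "\<dots> < (1 - r * S)\<^sup>2"
  proof -
    have "(1 - r * S)\<^sup>2 - (1 - 2 * r * a * cos th + r\<^sup>2 * a\<^sup>2)
          = r * (2 * (a * cos th - S) - r * (a\<^sup>2 - S\<^sup>2))"
      by (simp add: power2_eq_square algebra_simps)
    moreover have "r * (2 * (a * cos th - S) - r * (a\<^sup>2 - S\<^sup>2)) > 0"
      using r rb2 by simp
    ultimately show ?thesis by linarith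
  qed
  finally have "cmod ?z < 1 - r * S"
    by (rule power2_less_imp_less) (use pos in simp)
  then show ?thesis by simp
qed

theorem lemma2:
  fixes G Ginv :: "complex^'n^'n"
    and Dm Dp :: "'n \<Rightarrow> 'n \<Rightarrow> real"
    and rho :: "'n \<Rightarrow> real"
  defines "Delta \<equiv> Ginv ** G"
  assumes polar: "\<And>i j. Dm i j = cmod (Delta $ i $ j) \<and> Delta $ i $ j = complex_of_real (Dm i j) * cis (Dp i j)"
    and diag_nz: "\<And>i. Dm i i \<noteq> 0"
    and dom: "\<And>i. Dm i i * cos (Dp i i) > (\<Sum>j\<in>UNIV - {i}. Dm i j)"
    and rho_pos: "\<And>i. 0 < rho i"
    and rho_bnd: "\<And>i. rho i < 2 * ((Dm i i * cos (Dp i i) - (\<Sum>j\<in>UNIV - {i}. Dm i j))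
                     / ((Dm i i)\<^sup>2 - (\<Sum>j\<in>UNIV - {i}. Dm i j)\<^sup>2))"
  shows "(\<forall>l. is_eigenvalue (mat 1 - diag_real rho ** Delta) l \<longrightarrow> cmod l < 1)
         \<and> invertible G \<and> invertible Ginv
         \<and> (\<forall>Yd U0. (\<lambda>k. ilc_seq rho Ginv G Yd U0 k) \<longlonglongrightarrow> matrix_inv G *v Yd)"
proof -
  define A where "A = mat 1 - diag_real rho ** Delta"
  have Aent: "A $ i $ j = (if i = j then 1 else 0) - complex_of_real (rho i) * Delta $ i $ j" for i j
  proof -
    have "(diag_real rho ** Delta) $ i $ j = complex_of_real (rho i) * Delta $ i $ j"
    proof -
      have "(diag_real rho ** Delta) $ i $ j = (\<Sum>k\<in>UNIV. (if i = k then complex_of_real (rho i) else 0) * Delta $ k $ j)"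
        unfolding matrix_matrix_mult_def diag_real_def vec_lambda_beta by (rule sum.cong) auto
      also have "\<dots> = (\<Sum>k\<in>UNIV. if i = k then complex_of_real (rho i) * Delta $ k $ j else 0)"
        by (rule sum.cong) auto
      also have "\<dots> = complex_of_real (rho i) * Delta $ i $ j" by (simp add: sum.delta')
      finally show ?thesis by (simp only:)
    qed
    then show ?thesis by (simp add: A_def mat_def)
  qed
  have cm: "cmod (Delta $ i $ j) = Dm i j" for i j using conjunct1[OF polar[of i j]] by (rule sym)
  have Dm0: "Dm i j \<ge> 0" for i j using cm[of i j] norm_ge_zero by metis
  define qf where "qf i = (\<Sum>j\<in>UNIV. cmod (A $ i $ j))" for i
  have qf_lt: "qf i < 1" for i
  proof -
    let ?S = "\<Sum>j\<in>UNIV - {i}. Dm i j"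
    have "qf i = cmod (A $ i $ i) + (\<Sum>j\<in>UNIV - {i}. cmod (A $ i $ j))"
      unfolding qf_def by (simp add: sum.remove)
    also have "(\<Sum>j\<in>UNIV - {i}. cmod (A $ i $ j)) = (\<Sum>j\<in>UNIV - {i}. rho i * Dm i j)"
      by (rule sum.cong) (auto simp: Aent norm_mult cm less_imp_le[OF rho_pos])
    also have "\<dots> = rho i * ?S" by (simp add: sum_distrib_left)
    also have "A $ i $ i = 1 - complex_of_real (rho i) * (complex_of_real (Dm i i) * cis (Dp i i))"
      using Aent[of i i] conjunct2[OF polar[of i i]] by (simp only: if_P[OF refl])
    finally have qe: "qf i = cmod (1 - complex_of_real (rho i) * (complex_of_real (Dm i i) * cis (Dp i i))) + rho i * ?S" .
    have "Dm i i \<ge> 0" by (rule Dm0)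
    hence a: "Dm i i > 0" using diag_nz[of i] by linarith
    have S: "?S \<ge> 0" using Dm0 by (simp add: sum_nonneg)
    show ?thesis unfolding qe by (rule scalar_bound[OF a S dom rho_pos rho_bnd])
  qed
  define q where "q = Max (range qf)"
  have qge: "qf i \<le> q" for i unfolding q_def by (rule Max_ge) auto
  have "q \<in> range qf" unfolding q_def by (rule Max_in) auto
  hence q1: "q < 1" using qf_lt by auto
  have q0: "0 \<le> q"
  proof -
    have "0 \<le> qf undefined" unfolding qf_def by (rule sum_nonneg) simp
    then show ?thesis using qge[of undefined] by linarith
  qed
  have contr: "mxn (A *v v) \<le> q * mxn v" for v
  proof (rule mxn_le)
    fix i
    have "cmod ((A *v v) $ i) \<le> qf i * mxn v" unfolding qf_def by (rule row_bound)
    also have "\<dots> \<le> q * mxn v" by (rule mult_right_mono[OF qge mxn_nonneg])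
    finally show "cmod ((A *v v) $ i) \<le> q * mxn v" .
  qed
  have Av: "A *v v = v - diag_real rho *v (Delta *v v)" for v
    unfolding A_def matrix_vector_mult_diff_rdistrib matrix_vector_mul_assoc[symmetric] matrix_vector_mul_lid ..
  have eig: "cmod l < 1" if ev: "is_eigenvalue A l" for l
  proof -
    obtain v where v: "v \<noteq> 0" "A *v v = (\<chi> i. l * v $ i)"
      using ev unfolding is_eigenvalue_def by metis
    obtain k where k: "mxn v = cmod (v $ k)" using mxn_attained by blast
    have mpos: "mxn v > 0"
    proof -
      have "mxn v \<noteq> 0" using v(1) mxn_zero by blast
      then show ?thesis using mxn_nonneg[of v] by linarith
    qed
    have "cmod l * mxn v = cmod ((A *v v) $ k)" using v(2) k by (simp add: norm_mult)
    also have "\<dots> \<le> mxn (A *v v)" by (rule mxn_ge)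
    also have "\<dots> \<le> q * mxn v" by (rule contr)
    finally have "cmod l \<le> q" using mpos by simp
    then show ?thesis using q1 by simp
  qed
  have invD: "invertible Delta"
    unfolding invertible_left_inverse matrix_left_invertible_ker
  proof (intro allI impI)
    fix v assume "Delta *v v = 0"
    hence "A *v v = v" using Av by simp
    hence "mxn v \<le> q * mxn v" using contr[of v] by simp
    hence "(1 - q) * mxn v \<le> (1 - q) * 0" by (simp add: algebra_simps)
    hence "mxn v \<le> 0" using q1 by (subst (asm) mult_le_cancel_left_pos) auto
    hence "mxn v = 0" using mxn_nonneg[of v] by linarith
    then show "v = 0" by (rule mxn_zero)
  qed
  have "det Delta \<noteq> 0" using invD invertible_det_nz by blast
  hence dets: "det Ginv \<noteq> 0" "det G \<noteq> 0" unfolding Delta_def det_mul by auto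
  have invG: "invertible G" and invGi: "invertible Ginv"
    using dets invertible_det_nz by blast+
  have conv: "(\<lambda>k. ilc_seq rho Ginv G Yd U0 k) \<longlonglongrightarrow> matrix_inv G *v Yd" for Yd U0
  proof -
    define Us where "Us = matrix_inv G *v Yd"
    have "G ** matrix_inv G = mat 1"
      using invG unfolding invertible_def matrix_inv_def by (rule someI_ex[THEN conjunct1])
    hence GUs: "G *v Us = Yd" unfolding Us_def
      by (simp add: matrix_vector_mul_assoc)
    define e where "e k = ilc_seq rho Ginv G Yd U0 k - Us" for k
    have estep: "e (Suc k) = A *v e k" for k
    proof -
      define U where "U = ilc_seq rho Ginv G Yd U0 k"
      define D where "D = diag_real rho ** Delta"
      have k1: "Yd - G *v U = G *v (Us - U)"
        unfolding matrix_vector_mult_diff_distrib GUs ..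
      have k2: "(diag_real rho ** Ginv) *v (G *v (Us - U)) = D *v (Us - U)"
        unfolding D_def Delta_def matrix_vector_mul_assoc matrix_mul_assoc ..
      have "e (Suc k) = U + D *v (Us - U) - Us"
        unfolding e_def ilc_seq.simps U_def[symmetric] k1 k2 ..
      also have "\<dots> = (U - Us) - (D *v U - D *v Us)"
        unfolding matrix_vector_mult_diff_distrib by simp
      also have "\<dots> = A *v e k"
        unfolding Av e_def U_def[symmetric] matrix_vector_mul_assoc D_def matrix_vector_mult_diff_distrib
        by (simp add: algebra_simps)
      finally show ?thesis .
    qed
    have eb: "mxn (e k) \<le> q ^ k * mxn (e 0)" for k
    proof (induction k)
      case 0 then show ?case by simp
    next
      case (Suc k)
      have "mxn (e (Suc k)) \<le> q * mxn (e k)" using estep contr by simp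
      also have "\<dots> \<le> q * (q ^ k * mxn (e 0))" by (rule mult_left_mono[OF Suc q0])
      finally show ?case by (simp add: algebra_simps)
    qed
    have p0: "(\<lambda>k. q ^ k) \<longlonglongrightarrow> 0" by (rule LIMSEQ_power_zero) (use q0 q1 in simp)
    have lim0: "(\<lambda>k. real CARD('n) * (q ^ k * mxn (e 0))) \<longlonglongrightarrow> 0"
      by (rule tendsto_mult_right_zero[OF tendsto_mult_left_zero[OF p0]])
    have "e \<longlonglongrightarrow> 0"
    proof (rule Lim_null_comparison[OF _ lim0])
      show "\<forall>\<^sub>F k in sequentially. norm (e k) \<le> real CARD('n) * (q ^ k * mxn (e 0))"
      proof (rule always_eventually, rule allI)
        fix k
        show "norm (e k) \<le> real CARD('n) * (q ^ k * mxn (e 0))"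
        proof -
          have "real CARD('n) * mxn (e k) \<le> real CARD('n) * (q ^ k * mxn (e 0))"
            by (rule mult_left_mono[OF eb]) simp
          then show ?thesis using norm_le_mxn[of "e k"] by (rule order_trans[rotated])
        qed
      qed
    qed
    moreover have "e = (\<lambda>k. ilc_seq rho Ginv G Yd U0 k - Us)" by (simp add: e_def fun_eq_iff)
    ultimately show ?thesis unfolding Us_def[symmetric] Lim_null[of _ Us] by simp
  qed
  have eig': "\<forall>l. is_eigenvalue (mat 1 - diag_real rho ** Delta) l \<longrightarrow> cmod l < 1"
    by (intro allI impI eig[unfolded A_def])
  have conv': "\<forall>Yd U0. (\<lambda>k. ilc_seq rho Ginv G Yd U0 k) \<longlonglongrightarrow> matrix_inv G *v Yd"
    by (intro allI conv)
  show ?thesis by (intro conjI eig' invG invGi conv')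
qed

end
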